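(* Let $G$ be a multigraph of even order with $\Delta(G) < \Gamma(G) \le \Delta(G)+1$, and write $\Delta = \Delta(G)$. Let $S \subseteq V(G)$ with $|S|$ odd, $|S|\ge 3$, such that $\langle S\rangle$ is $\Delta$-overfull in $G$ and $\operatorname{sl}(\langle S\rangle, \Delta)$ is minimum among all $\Delta$-overfull induced odd-order subgraphs of $G$. Then $\Delta(G_S) \le \Delta(G)$, $\Gamma(G_S) \le \Delta(G)+1$, $\Delta(G_{S^c}) \le \Delta(G)$, and $\Gamma(G_{S^c}) \le \Delta(G)+1$, where $S^c = V(G)\setminus S$.
   Context: Multigraphs are finite and loopless, multiple edges allowed. For $S \subseteq V(G)$, $\langle S\rangle$ is the induced subgraph. For a multigraph $H$ of odd order $n(H)\ge 3$ with $e(H)$ edges, $t(H) = 2e(H)/(n(H)-1)$; $H$ is $k$-overfull if $t(H)>k$. The $k$-slack is $\operatorname{sl}(H,k) = (k+1)(n(H)-1)/2 - e(H)$. $\Gamma(G) = \max\{t(\langle R\rangle) : R\subseteq V(G), |R| \text{ odd}, |R|\ge 3\}$ (statements about $\Gamma$ of a multigraph with no such $R$ are vacuous). Shrinking: for a nonempty proper subset $S$ of $V(G)$, $G_S$ has vertex set $(V(G)\setminus S)\cup\{s\}$ for a new vertex $s$; its edges are the edges of $G - S$ together with, for each $u \notin S$, exactly as many edges $us$ as there are edges of $G$ joining $u$ to vertices of $S$. *)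

theory Defs
  imports Complex_Main
begin

text \<open>A finite loopless multigraph is given by a finite vertex set V and a
  symmetric multiplicity function m (m u v = number of edges joining u and v),
  vanishing on the diagonal and outside V.\<close>

definition multigraph :: "'a set \<Rightarrow> ('a \<Rightarrow> 'a \<Rightarrow> nat) \<Rightarrow> bool" where
  "multigraph V m \<longleftrightarrow> finite V \<and> (\<forall>u v. m u v = m v u) \<and> (\<forall>u. m u u = 0)
     \<and> (\<forall>u v. m u v \<noteq> 0 \<longrightarrow> u \<in> V \<and> v \<in> V)"

definition degree :: "'a set \<Rightarrow> ('a \<Rightarrow> 'a \<Rightarrow> nat) \<Rightarrow> 'a \<Rightarrow> nat" where
  "degree V m u = (\<Sum>v\<in>V. m u v)"

definition max_degree :: "'a set \<Rightarrow> ('a \<Rightarrow> 'a \<Rightarrow> nat) \<Rightarrow> nat" where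
  "max_degree V m = Max (degree V m ` V)"

definition edges_in :: "('a \<Rightarrow> 'a \<Rightarrow> nat) \<Rightarrow> 'a set \<Rightarrow> nat" where
  "edges_in m R = (\<Sum>u\<in>R. \<Sum>v\<in>R. m u v) div 2"

definition tval :: "('a \<Rightarrow> 'a \<Rightarrow> nat) \<Rightarrow> 'a set \<Rightarrow> real" where
  "tval m R = 2 * real (edges_in m R) / (real (card R) - 1)"

definition overfull :: "('a \<Rightarrow> 'a \<Rightarrow> nat) \<Rightarrow> 'a set \<Rightarrow> nat \<Rightarrow> bool" where
  "overfull m R k \<longleftrightarrow> tval m R > real k"

definition slack :: "('a \<Rightarrow> 'a \<Rightarrow> nat) \<Rightarrow> 'a set \<Rightarrow> nat \<Rightarrow> real" where
  "slack m R k = (real k + 1) * (real (card R) - 1) / 2 - real (edges_in m R)"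

definition odd_sets :: "'a set \<Rightarrow> 'a set set" where
  "odd_sets V = {R. R \<subseteq> V \<and> odd (card R) \<and> card R \<ge> 3}"

definition Gamma :: "'a set \<Rightarrow> ('a \<Rightarrow> 'a \<Rightarrow> nat) \<Rightarrow> real" where
  "Gamma V m = Max (tval m ` odd_sets V)"

text \<open>Shrinking S to a new vertex; the new vertex is None, old vertices are Some u.\<close>
definition shrink_V :: "'a set \<Rightarrow> 'a set \<Rightarrow> 'a option set" where
  "shrink_V V S = Some ` (V - S) \<union> {None}"

fun shrink_m :: "('a \<Rightarrow> 'a \<Rightarrow> nat) \<Rightarrow> 'a set \<Rightarrow> 'a option \<Rightarrow> 'a option \<Rightarrow> nat" where
  "shrink_m m S (Some u) (Some v) = (if u \<notin> S \<and> v \<notin> S then m u v else 0)"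
| "shrink_m m S (Some u) None = (if u \<notin> S then (\<Sum>w\<in>S. m u w) else 0)"
| "shrink_m m S None (Some v) = (if v \<notin> S then (\<Sum>w\<in>S. m v w) else 0)"
| "shrink_m m S None None = 0"

end

theory Submission
  imports Defs
begin

definition W :: "('a \<Rightarrow> 'a \<Rightarrow> nat) \<Rightarrow> 'a set \<Rightarrow> 'a set \<Rightarrow> nat" where
  "W m A B = (\<Sum>u\<in>A. \<Sum>v\<in>B. m u v)"

lemma W_Un2: "finite B1 \<Longrightarrow> finite B2 \<Longrightarrow> B1 \<inter> B2 = {} \<Longrightarrow> W m A (B1 \<union> B2) = W m A B1 + W m A B2"
  by (simp add: W_def sum.union_disjoint sum.distrib)

lemma W_Un1: "finite A1 \<Longrightarrow> finite A2 \<Longrightarrow> A1 \<inter> A2 = {} \<Longrightarrow> W m (A1 \<union> A2) B = W m A1 B + W m A2 B"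
  by (simp add: W_def sum.union_disjoint)

lemma W_sym: assumes "\<forall>u v. m u v = m v u" shows "W m A B = W m B A"
proof -
  have "W m A B = (\<Sum>v\<in>B. \<Sum>u\<in>A. m u v)" unfolding W_def by (rule sum.swap)
  also have "\<dots> = W m B A" unfolding W_def using assms by simp
  finally show ?thesis .
qed

lemma W_even: assumes sym: "\<forall>u v. m u v = m v u" and diag: "\<forall>u. m u u = 0" and fin: "finite R"
  shows "even (W m R R)"
  using fin
proof (induction R rule: finite_induct)
  case empty
  then show ?case by (simp add: W_def)
next
  case (insert x F)
  have e1: "W m (insert x F) B = (\<Sum>v\<in>B. m x v) + W m F B" for B
    using insert by (simp add: W_def)
  have e2: "W m A (insert x F) = (\<Sum>u\<in>A. m u x) + W m A F" if "finite A" for A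
    using insert by (simp add: W_def sum.distrib)
  have "W m (insert x F) (insert x F) = (\<Sum>v\<in>insert x F. m x v) + ((\<Sum>u\<in>F. m u x) + W m F F)"
    using e1 e2 insert by simp
  also have "\<dots> = 2 * (\<Sum>v\<in>F. m x v) + W m F F"
    using insert sym diag by simp
  finally show ?case using insert by simp
qed

lemma edges_W: "\<forall>u v. m u v = m v u \<Longrightarrow> \<forall>u. m u u = 0 \<Longrightarrow> finite R \<Longrightarrow> 2 * edges_in m R = W m R R"
proof -
  assume a: "\<forall>u v. m u v = m v u" "\<forall>u. m u u = 0" "finite R"
  have "edges_in m R = W m R R div 2" by (simp add: edges_in_def W_def)
  with W_even[OF a] show ?thesis by simp
qed

lemma tval_W: assumes "\<forall>u v. m u v = m v u" "\<forall>u. m u u = 0" "finite R"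
  shows "tval m R = real (W m R R) / (real (card R) - 1)"
proof -
  have "2 * real (edges_in m R) = real (W m R R)"
    using edges_W[OF assms] by (metis of_nat_mult of_nat_numeral)
  then show ?thesis by (simp add: tval_def)
qed

lemma slack_W: assumes "\<forall>u v. m u v = m v u" "\<forall>u. m u u = 0" "finite R"
  shows "slack m R k = ((real k + 1) * (real (card R) - 1) - real (W m R R)) / 2"
proof -
  have "2 * real (edges_in m R) = real (W m R R)"
    using edges_W[OF assms] by (metis of_nat_mult of_nat_numeral)
  then show ?thesis by (simp add: slack_def field_simps)
qed

lemma tval_le_conv: assumes "card R \<ge> 3" "tval m R = real w / (real (card R) - 1)"
  shows "tval m R \<le> real k + 1 \<longleftrightarrow> w \<le> (k+1)*(card R - 1)"
proof -
  have c: "real (card R) - 1 = real (card R - 1)" using assms(1) by (simp add: of_nat_diff)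
  have p0: "card R - 1 > 0" using assms(1) by linarith
  have p: "real (card R - 1) > 0" using p0 by (simp only: of_nat_0_less_iff)
  have tv: "tval m R = real w / real (card R - 1)" by (simp only: assms(2) c)
  have "tval m R \<le> real k + 1 \<longleftrightarrow> real w \<le> (real k + 1) * real (card R - 1)"
    unfolding tv by (rule pos_divide_le_eq[OF p])
  also have "\<dots> \<longleftrightarrow> real w \<le> real ((k+1)*(card R - 1))" by (simp only: of_nat_mult of_nat_add of_nat_1)
  also have "\<dots> \<longleftrightarrow> w \<le> (k+1)*(card R - 1)" by (rule of_nat_le_iff)
  finally show ?thesis .
qed

lemma over_conv: assumes "card R \<ge> 3" "tval m R = real w / (real (card R) - 1)"
  shows "overfull m R k \<longleftrightarrow> k*(card R - 1) < w"
proof -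
  have c: "real (card R) - 1 = real (card R - 1)" using assms(1) by (simp add: of_nat_diff)
  have p0: "card R - 1 > 0" using assms(1) by linarith
  have p: "real (card R - 1) > 0" using p0 by (simp only: of_nat_0_less_iff)
  have tv: "tval m R = real w / real (card R - 1)" by (simp only: assms(2) c)
  have "overfull m R k \<longleftrightarrow> real k * real (card R - 1) < real w"
    unfolding overfull_def tv by (rule pos_less_divide_eq[OF p])
  also have "\<dots> \<longleftrightarrow> real (k * (card R - 1)) < real w" by (simp only: of_nat_mult)
  also have "\<dots> \<longleftrightarrow> k*(card R - 1) < w" by (rule of_nat_less_iff)
  finally show ?thesis .
qed

lemma half_cmp: "((a::real) - x)/2 \<le> (b - y)/2 \<longleftrightarrow> a + y \<le> b + x"
  by (rule iffI) (simp_all add: field_simps)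

lemma slack_conv:
  assumes "slack m S k = ((real k + 1) * (real (card S) - 1) - real wS) / 2"
    "slack m R k = ((real k + 1) * (real (card R) - 1) - real wR) / 2"
    "card S \<ge> 1" "card R \<ge> 1"
  shows "slack m S k \<le> slack m R k \<longleftrightarrow> (k+1)*(card S - 1) + wR \<le> (k+1)*(card R - 1) + wS"
proof -
  have c1: "real ((k+1)*(card S - 1)) = (real k + 1) * (real (card S) - 1)"
    by (simp only: of_nat_mult of_nat_diff[OF assms(3)] of_nat_add of_nat_1)
  have c2: "real ((k+1)*(card R - 1)) = (real k + 1) * (real (card R) - 1)"
    by (simp only: of_nat_mult of_nat_diff[OF assms(4)] of_nat_add of_nat_1)
  have "slack m S k \<le> slack m R k \<longleftrightarrow> real ((k+1)*(card S - 1) + wR) \<le> real ((k+1)*(card R - 1) + wS)"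
    unfolding assms(1,2) of_nat_add c1 c2 by (rule half_cmp)
  then show ?thesis by (simp only: of_nat_le_iff)
qed

lemma sum_None: "finite B \<Longrightarrow> (\<Sum>x\<in>insert None (Some ` B). f x) = f None + (\<Sum>u\<in>B. f (Some u))"
  by (simp add: sum.reindex)

lemma sum_Some: "(\<Sum>x\<in>Some ` B. f x) = (\<Sum>u\<in>B. f (Some u))"
  by (simp add: sum.reindex)

lemma S1: assumes "B \<inter> X = {}" shows "W (shrink_m m X) (Some ` B) (Some ` B) = W m B B"
  unfolding W_def sum_Some using assms by (auto intro!: sum.cong)

lemma S2: assumes "finite B" "B \<inter> X = {}"
  shows "W (shrink_m m X) (insert None (Some ` B)) (insert None (Some ` B)) = W m B B + 2 * W m B X"
proof -
  have "W (shrink_m m X) (insert None (Some ` B)) (insert None (Some ` B))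
     = (\<Sum>u\<in>B. shrink_m m X None (Some u)) + (\<Sum>u\<in>B. shrink_m m X (Some u) None + (\<Sum>v\<in>B. shrink_m m X (Some u) (Some v)))"
    unfolding W_def using assms by (simp add: sum_None sum_Some)
  also have "\<dots> = W m B X + (W m B X + W m B B)"
  proof -
    have a: "(\<Sum>u\<in>B. shrink_m m X None (Some u)) = W m B X"
      unfolding W_def using assms by (intro sum.cong) auto
    have in2: "(\<Sum>v\<in>B. shrink_m m X (Some u) (Some v)) = (\<Sum>v\<in>B. m u v)" if "u \<in> B" for u
      using assms that by (intro sum.cong) auto
    have b: "(\<Sum>u\<in>B. shrink_m m X (Some u) None + (\<Sum>v\<in>B. shrink_m m X (Some u) (Some v)))
        = (\<Sum>u\<in>B. (\<Sum>w\<in>X. m u w) + (\<Sum>v\<in>B. m u v))"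
      using assms in2 by (intro sum.cong) auto
    have c: "(\<Sum>u\<in>B. (\<Sum>w\<in>X. m u w) + (\<Sum>v\<in>B. m u v)) = W m B X + W m B B"
      by (simp add: W_def sum.distrib)
    show ?thesis by (simp only: a b c)
  qed
  finally show ?thesis by simp
qed

lemma S3: assumes "finite V" "X \<subseteq> V" "u \<in> V - X"
  shows "degree (shrink_V V X) (shrink_m m X) (Some u) = degree V m u"
proof -
  have V'eq: "shrink_V V X = insert None (Some ` (V - X))" by (auto simp: shrink_V_def)
  have fVX: "finite (V - X)" using assms by simp
  have i: "(\<Sum>v\<in>V - X. shrink_m m X (Some u) (Some v)) = (\<Sum>v\<in>V - X. m u v)"
    using assms by (intro sum.cong) auto
  have n: "shrink_m m X (Some u) None = (\<Sum>w\<in>X. m u w)" using assms by simp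
  have "degree (shrink_V V X) (shrink_m m X) (Some u) = shrink_m m X (Some u) None + (\<Sum>v\<in>V - X. shrink_m m X (Some u) (Some v))"
    unfolding degree_def V'eq by (rule sum_None[OF fVX])
  also have "\<dots> = (\<Sum>w\<in>X. m u w) + (\<Sum>v\<in>V - X. m u v)" by (simp only: i n)
  also have "\<dots> = (\<Sum>v\<in>V. m u v)"
    using sum.subset_diff[OF assms(2) assms(1), of "m u"] by simp
  finally show ?thesis by (simp add: degree_def)
qed

lemma S4: assumes "finite V"
  shows "degree (shrink_V V X) (shrink_m m X) None = W m (V - X) X"
proof -
  have V'eq: "shrink_V V X = insert None (Some ` (V - X))" by (auto simp: shrink_V_def)
  have fVX: "finite (V - X)" using assms by simp
  have "degree (shrink_V V X) (shrink_m m X) None = shrink_m m X None None + (\<Sum>v\<in>V - X. shrink_m m X None (Some v))"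
    unfolding degree_def V'eq by (rule sum_None[OF fVX])
  also have "\<dots> = (\<Sum>v\<in>V - X. \<Sum>w\<in>X. m v w)" by simp
  finally show ?thesis by (simp add: W_def)
qed

lemma finite_odd_sets: "finite A \<Longrightarrow> finite (odd_sets A)"
  by (rule finite_subset[of _ "Pow A"]) (auto simp: odd_sets_def)


lemma sh_sym: "\<forall>u v. m u v = m v u \<Longrightarrow> \<forall>x y. shrink_m m X x y = shrink_m m X y x"
proof (intro allI)
  fix x y assume "\<forall>u v. m u v = m v u"
  then show "shrink_m m X x y = shrink_m m X y x"
    by (cases x; cases y) auto
qed

lemma sh_diag: "\<forall>u. m u u = 0 \<Longrightarrow> \<forall>x. shrink_m m X x x = 0"
proof
  fix x assume "\<forall>u. m u u = 0"
  then show "shrink_m m X x x = 0" by (cases x) auto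
qed

lemma shrink_bounds:
  fixes V X :: "'a set" and m :: "'a \<Rightarrow> 'a \<Rightarrow> nat" and D :: nat
  assumes G: "multigraph V m" and XV: "X \<subseteq> V"
    and deg: "\<forall>u\<in>V. degree V m u \<le> D"
    and dN: "W m (V - X) X \<le> D"
    and gam: "\<forall>B\<in>odd_sets V. W m B B \<le> (D+1)*(card B - 1)"
    and key: "\<forall>B. B \<subseteq> V - X \<longrightarrow> even (card B) \<longrightarrow> card B \<ge> 2 \<longrightarrow> W m B B + 2 * W m B X \<le> (D+1)*card B"
  shows "max_degree (shrink_V V X) (shrink_m m X) \<le> D \<and>
    (odd_sets (shrink_V V X) \<noteq> {} \<longrightarrow> Gamma (shrink_V V X) (shrink_m m X) \<le> real D + 1)"
proof -
  have fin: "finite V" and sym: "\<forall>u v. m u v = m v u" and diag: "\<forall>u. m u u = 0"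
    using G by (auto simp: multigraph_def)
  let ?V' = "shrink_V V X"
  let ?m' = "shrink_m m X"
  have V'eq: "?V' = insert None (Some ` (V - X))" by (auto simp: shrink_V_def)
  have finV': "finite ?V'" using fin V'eq by simp
  have sym': "\<forall>x y. ?m' x y = ?m' y x" using sh_sym[of m X] sym by blast
  have diag': "\<forall>x. ?m' x x = 0" using sh_diag[of m X] diag by blast
  have degs: "\<forall>x\<in>?V'. degree ?V' ?m' x \<le> D"
  proof
    fix x assume x: "x \<in> ?V'"
    show "degree ?V' ?m' x \<le> D"
    proof (cases x)
      case None
      then show ?thesis using S4[OF fin] dN by simp
    next
      case (Some u)
      then have "u \<in> V - X" using x V'eq by auto
      then show ?thesis using S3[OF fin XV] deg Some by auto
    qed
  qed
  have md: "max_degree ?V' ?m' \<le> D"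
    unfolding max_degree_def using degs finV' V'eq by (auto intro!: Max.boundedI)
  have tv: "\<forall>R\<in>odd_sets ?V'. tval ?m' R \<le> real D + 1"
  proof
    fix R assume R: "R \<in> odd_sets ?V'"
    hence Rsub: "R \<subseteq> ?V'" and Rodd: "odd (card R)" and R3: "card R \<ge> 3"
      by (auto simp: odd_sets_def)
    have finR: "finite R" using Rsub finV' finite_subset by blast
    define B where "B = Some -` R"
    have BVX: "B \<subseteq> V - X" using Rsub V'eq B_def by auto
    have finB: "finite B" using BVX fin finite_subset by (metis finite_Diff)
    have BX: "B \<inter> X = {}" using BVX by auto
    have "W ?m' R R \<le> (D+1)*(card R - 1)"
    proof (cases "None \<in> R")
      case False
      have Req: "R = Some ` B"
      proof
        show "R \<subseteq> Some ` B"
        proof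
          fix x assume "x \<in> R"
          with False obtain y where "x = Some y" by (cases x) auto
          then show "x \<in> Some ` B" using \<open>x \<in> R\<close> B_def by auto
        qed
        show "Some ` B \<subseteq> R" using B_def by auto
      qed
      have cB: "card R = card B" using Req by (simp add: card_image)
      have "B \<in> odd_sets V" using BVX Rodd R3 cB by (auto simp: odd_sets_def)
      then have "W m B B \<le> (D+1)*(card B - 1)" using gam by blast
      moreover have "W ?m' R R = W m B B" using Req S1[OF BX] by simp
      ultimately show ?thesis using cB by simp
    next
      case True
      have Req: "R = insert None (Some ` B)"
      proof
        show "R \<subseteq> insert None (Some ` B)"
        proof
          fix x assume "x \<in> R"
          then show "x \<in> insert None (Some ` B)" using B_def by (cases x) auto
        qed
        show "insert None (Some ` B) \<subseteq> R" using B_def True by auto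
      qed
      have cB: "card R = card B + 1" using Req finB by (simp add: card_image)
      have "even (card B)" "card B \<ge> 2" using cB Rodd R3 by auto
      hence "W m B B + 2 * W m B X \<le> (D+1)*card B" using key BVX by blast
      moreover have "W ?m' R R = W m B B + 2 * W m B X" using Req S2[OF finB BX] by simp
      ultimately show ?thesis using cB by simp
    qed
    then show "tval ?m' R \<le> real D + 1"
      using tval_le_conv[OF R3 tval_W[OF sym' diag' finR]] by blast
  qed
  have Gam: "odd_sets ?V' \<noteq> {} \<longrightarrow> Gamma ?V' ?m' \<le> real D + 1"
    unfolding Gamma_def using tv finite_odd_sets[OF finV'] by (auto intro!: Max.boundedI)
  show ?thesis using md Gam by blast
qed


theorem lemmaH:
  fixes V S :: "'a set" and m :: "'a \<Rightarrow> 'a \<Rightarrow> nat"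
  assumes G: "multigraph V m"
    and even_order: "even (card V)"
    and lower: "real (max_degree V m) < Gamma V m"
    and upper: "Gamma V m \<le> real (max_degree V m) + 1"
    and S: "S \<in> odd_sets V"
    and S_over: "overfull m S (max_degree V m)"
    and S_min: "\<forall>R \<in> odd_sets V. overfull m R (max_degree V m) \<longrightarrow>
                  slack m S (max_degree V m) \<le> slack m R (max_degree V m)"
  shows "max_degree (shrink_V V S) (shrink_m m S) \<le> max_degree V m
    \<and> (odd_sets (shrink_V V S) \<noteq> {} \<longrightarrow>
         Gamma (shrink_V V S) (shrink_m m S) \<le> real (max_degree V m) + 1)
    \<and> max_degree (shrink_V V (V - S)) (shrink_m m (V - S)) \<le> max_degree V m
    \<and> (odd_sets (shrink_V V (V - S)) \<noteq> {} \<longrightarrow>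
         Gamma (shrink_V V (V - S)) (shrink_m m (V - S)) \<le> real (max_degree V m) + 1)"
proof -
  have fin: "finite V" and sym: "\<forall>u v. m u v = m v u" and diag: "\<forall>u. m u u = 0"
    using G by (auto simp: multigraph_def)
  define D where "D = max_degree V m"
  have Ssub: "S \<subseteq> V" and Sodd: "odd (card S)" and S3: "card S \<ge> 3"
    using S by (auto simp: odd_sets_def)
  have finS: "finite S" using Ssub fin finite_subset by blast
  have tvW: "tval m R = real (W m R R) / (real (card R) - 1)" if "finite R" for R
    using tval_W[OF sym diag that] .
  have slW: "slack m R D = ((real D + 1) * (real (card R) - 1) - real (W m R R)) / 2" if "finite R" for R
    using slack_W[OF sym diag that] .
  have deg: "\<forall>u\<in>V. degree V m u \<le> D"
    unfolding D_def max_degree_def using fin by auto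
  have gam: "\<forall>B\<in>odd_sets V. W m B B \<le> (D+1)*(card B - 1)"
  proof
    fix B assume B: "B \<in> odd_sets V"
    then have B3: "card B \<ge> 3" and finB: "finite B" using fin finite_subset
      by (auto simp: odd_sets_def)
    have "tval m B \<le> Gamma V m" unfolding Gamma_def
      using B finite_odd_sets[OF fin] by (auto intro!: Max_ge)
    then have "tval m B \<le> real D + 1" using upper D_def by simp
    then show "W m B B \<le> (D+1)*(card B - 1)" using tval_le_conv[OF B3 tvW[OF finB]] by blast
  qed
  have Sover: "D * (card S - 1) < W m S S"
    using S_over over_conv[OF S3 tvW[OF finS]] D_def by blast
  have min': "(D+1)*(card S - 1) + W m R R \<le> (D+1)*(card R - 1) + W m S S"
    if R: "R \<in> odd_sets V" and ov: "D * (card R - 1) < W m R R" for R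
  proof -
    have R3: "card R \<ge> 3" and finR: "finite R" using R fin finite_subset by (auto simp: odd_sets_def)
    have "overfull m R D" using ov over_conv[OF R3 tvW[OF finR]] by blast
    then have "slack m S D \<le> slack m R D" using S_min R D_def by blast
    then show ?thesis using slack_conv[OF slW[OF finS] slW[OF finR]] S3 R3 by simp
  qed
  have degsum: "W m B V \<le> D * card B" if "B \<subseteq> V" for B
  proof -
    have "W m B V = (\<Sum>u\<in>B. degree V m u)" by (simp add: W_def degree_def)
    also have "\<dots> \<le> of_nat (card B) * D" using deg that by (intro sum_bounded_above) auto
    finally show ?thesis by (simp add: mult.commute)
  qed
  have VS: "V - (V - S) = S" using Ssub by auto
  have VSU: "V = S \<union> (V - S)" using Ssub by auto
  have WSV: "W m S V = W m S S + W m S (V - S)"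
    using W_Un2[of S "V - S" m S] finS fin VSU by (metis Diff_disjoint finite_Diff)
  have dSV: "W m S (V - S) \<le> D"
  proof -
    have "W m S V \<le> D * card S" using degsum Ssub by blast
    moreover have "D * card S = D * (card S - 1) + D" using S3
      by (cases "card S") auto
    ultimately show ?thesis using WSV Sover by linarith
  qed
  have dN1: "W m (V - S) S \<le> D" using dSV W_sym[OF sym] by metis
  have dN2: "W m (V - (V - S)) (V - S) \<le> D" using dSV VS by simp
  have key1: "\<forall>B. B \<subseteq> V - S \<longrightarrow> even (card B) \<longrightarrow> card B \<ge> 2 \<longrightarrow>
      W m B B + 2 * W m B S \<le> (D+1)*card B"
  proof (intro allI impI)
    fix B assume BS: "B \<subseteq> V - S" and Be: "even (card B)" and B2: "card B \<ge> 2"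
    have finB: "finite B" using BS fin finite_subset by blast
    have disj: "B \<inter> S = {}" using BS by auto
    define R where "R = B \<union> S"
    have cR: "card R = card B + card S" unfolding R_def using card_Un_disjoint[OF finB finS disj] .
    have Rodd: "R \<in> odd_sets V" unfolding odd_sets_def using cR BS Ssub Be Sodd S3 R_def by auto
    have "W m R R = W m B R + W m S R" unfolding R_def using W_Un1[OF finB finS disj] .
    also have "\<dots> = W m B B + W m B S + (W m S B + W m S S)"
      unfolding R_def using W_Un2[OF finB finS disj] by simp
    finally have WR: "W m R R = W m B B + 2 * W m B S + W m S S"
      using W_sym[OF sym, of S B] by simp
    define b where "b = card B"
    define c1 where "c1 = card S - 1"
    have cR1: "card R - 1 = b + c1" using cR S3 b_def c1_def by simp
    have e1: "(D+1)*(b+c1) = D*b + b + D*c1 + c1" by (simp add: algebra_simps)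
    have e2: "D*(b+c1) = D*b + D*c1" by (simp add: algebra_simps)
    have e3: "(D+1)*c1 = D*c1 + c1" by simp
    have e4: "(D+1)*b = D*b + b" by simp
    have So: "D * c1 < W m S S" using Sover c1_def by simp
    have "W m B B + 2 * W m B S \<le> (D+1)*b"
    proof (cases "D * (card R - 1) < W m R R")
      case True
      from min'[OF Rodd True] have "(D+1)*c1 + W m R R \<le> (D+1)*(b+c1) + W m S S"
        using cR1 c1_def by simp
      then show ?thesis using WR e1 e3 e4 by linarith
    next
      case False
      then have "W m R R \<le> D*(b+c1)" using cR1 by simp
      then show ?thesis using WR e2 e4 So by linarith
    qed
    then show "W m B B + 2 * W m B S \<le> (D+1)*card B" using b_def by simp
  qed
  have key2: "\<forall>B. B \<subseteq> V - (V - S) \<longrightarrow> even (card B) \<longrightarrow> card B \<ge> 2 \<longrightarrow>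
      W m B B + 2 * W m B (V - S) \<le> (D+1)*card B"
  proof (intro allI impI)
    fix B assume BS': "B \<subseteq> V - (V - S)" and Be: "even (card B)" and B2: "card B \<ge> 2"
    have BS: "B \<subseteq> S" using BS' VS by simp
    have finB: "finite B" using BS finS finite_subset by blast
    define T where "T = S - B"
    define Y where "Y = V - S"
    have finT: "finite T" using finS T_def by simp
    have finY: "finite Y" using fin Y_def by simp
    have dBT: "B \<inter> T = {}" using T_def by auto
    have SBT: "S = B \<union> T" using BS T_def by auto
    have cS: "card S = card B + card T" using SBT card_Un_disjoint[OF finB finT dBT] by simp
    define b where "b = card B"
    define t where "t = card T"
    have todd: "odd t" using cS Sodd Be b_def t_def by simp
    then have t1: "t \<ge> 1" by (cases t) auto
    have cS1: "card S - 1 = b + (t - 1)" using cS t1 b_def t_def by simp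
    have disjY: "(B \<union> T) \<inter> Y = {}" using SBT Y_def by auto
    have VBTY: "V = (B \<union> T) \<union> Y" using VSU SBT Y_def by auto
    have "W m B V = W m B (B \<union> T) + W m B Y"
      using VBTY W_Un2[of "B \<union> T" Y m B] finB finT finY disjY by simp
    also have "\<dots> = W m B B + W m B T + W m B Y" using W_Un2[OF finB finT dBT] by simp
    finally have dB: "W m B B + W m B T + W m B Y \<le> D * b"
      using degsum[of B] BS Ssub b_def by auto
    have "W m S S = W m B S + W m T S" using SBT W_Un1[OF finB finT dBT] by simp
    also have "\<dots> = W m B B + W m B T + (W m T B + W m T T)"
      using SBT W_Un2[OF finB finT dBT] by simp
    finally have WS: "W m S S = W m T T + 2 * W m B T + W m B B"
      using W_sym[OF sym, of T B] by simp
    have e1: "(D+1)*(b+(t-1)) = (D+1)*b + (D+1)*(t-1)" by (simp add: algebra_simps)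
    have e2: "D*(b+(t-1)) = D*b + D*(t-1)" by (simp add: algebra_simps)
    have e4: "(D+1)*b = D*b + b" by simp
    have So: "D * (b + (t-1)) < W m S S" using Sover cS1 by simp
    have "W m B B + 2 * W m B Y \<le> (D+1)*b"
    proof (cases "t \<ge> 3 \<and> D * (t - 1) < W m T T")
      case True
      have "T \<in> odd_sets V" unfolding odd_sets_def using True todd t_def T_def Ssub by auto
      from min'[OF this] True have "(D+1)*(card S - 1) + W m T T \<le> (D+1)*(t-1) + W m S S"
        using t_def by simp
      then have "(D+1)*b \<le> 2 * W m B T + W m B B" using cS1 e1 WS by simp
      then show ?thesis using dB e4 by linarith
    next
      case False
      have "W m T T \<le> D * (t - 1)"
      proof (cases "t \<ge> 3")
        case True then show ?thesis using False by simp
      next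
        case f3: False
        then have "t = 1" using todd t1 by presburger
        then have "card T = 1" using t_def by simp
        then obtain x where "T = {x}" by (rule card_1_singletonE)
        then show ?thesis using diag by (simp add: W_def)
      qed
      then show ?thesis using So e2 e4 WS dB by linarith
    qed
    then show "W m B B + 2 * W m B (V - S) \<le> (D+1)*card B" using b_def Y_def by simp
  qed
  note r1 = shrink_bounds[OF G Ssub deg dN1 gam key1]
  have VSV: "V - S \<subseteq> V" by auto
  note r2 = shrink_bounds[OF G VSV deg dN2 gam key2]
  show ?thesis using r1 r2 unfolding D_def by blast
qed

end
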